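(* Let $G\ne1$ be a finitely generated group in $\mathrm{Q}(\mathrm{PLO})$. Then there exists a normal subgroup $H\ne 1$ of $G$ such that whenever $A,B$ are finitely generated subgroups of $H$, there exists $g\in G$ such that $A^g$ and $B$ centralize each other.
   Context: $\mathrm{PLO}$ is the class of groups isomorphic to a subgroup of $\mathcal{P}$, the group of piecewise linear orientation preserving self-homeomorphisms of $[0,1]$. $\mathrm{Q}(\mathrm{PLO})$ is the class of groups isomorphic to a quotient of a $\mathrm{PLO}$-group. $A^g=gAg^{-1}$. *)

theory Defs
  imports "HOL-Analysis.Analysis" "HOL-Algebra.Algebra"
begin

text \<open>Piecewise linear orientation preserving self-homeomorphisms of [0,1],
  extended by the identity outside [0,1] so that functions are determined by
  their restriction to [0,1].\<close>

definition pl_on_unit :: "(real \<Rightarrow> real) \<Rightarrow> bool" where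
  "pl_on_unit f \<longleftrightarrow>
     (\<exists>S. finite S \<and> {0,1} \<subseteq> S \<and> S \<subseteq> {0..1} \<and>
        (\<forall>x\<in>S. \<forall>y\<in>S. x < y \<and> {x<..<y} \<inter> S = {} \<longrightarrow>
           (\<exists>a b. \<forall>t\<in>{x..y}. f t = a * t + b)))"

definition PLO_homeos :: "(real \<Rightarrow> real) set" where
  "PLO_homeos = {f. (\<exists>g. homeomorphism {0..1} {0..1} f g) \<and> mono_on {0..1} f
                   \<and> pl_on_unit f \<and> (\<forall>x. x \<notin> {0..1} \<longrightarrow> f x = x)}"

definition PLgroup :: "(real \<Rightarrow> real) monoid" where
  "PLgroup = \<lparr>carrier = PLO_homeos, mult = (\<lambda>f g. f \<circ> g), one = id\<rparr>"

definition in_QPLO :: "('a, 'b) monoid_scheme \<Rightarrow> bool" where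
  "in_QPLO G \<longleftrightarrow> (\<exists>K N. subgroup K PLgroup \<and> N \<lhd> (PLgroup\<lparr>carrier := K\<rparr>)
                      \<and> G \<cong> ((PLgroup\<lparr>carrier := K\<rparr>) Mod N))"

definition fin_gen :: "('a, 'b) monoid_scheme \<Rightarrow> 'a set \<Rightarrow> bool" where
  "fin_gen G A \<longleftrightarrow> (\<exists>S. finite S \<and> S \<subseteq> carrier G \<and> A = generate G S)"

end

theory Submission
  imports Defs
begin


lemma PLO_basic:
  assumes "f \<in> PLO_homeos"
  shows "f 0 = 0" "f 1 = 1" "f ` {0..1} = {0..1}" "continuous_on {0..1} f"
    "inj_on f {0..1}" "mono_on {0..1} f" "\<And>x. x \<notin> {0..1} \<Longrightarrow> f x = x"
proof -
  obtain g where h: "homeomorphism {0..1} {0..1} f g" and m: "mono_on {0..1} f"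
    and out: "\<And>x. x \<notin> {0..1} \<Longrightarrow> f x = x"
    using assms unfolding PLO_homeos_def by blast
  show im: "f ` {0..1} = {0..1}" and c: "continuous_on {0..1} f"
    using h unfolding homeomorphism_def by auto
  show "inj_on f {0..1}" using h unfolding homeomorphism_def by (metis inj_on_inverseI)
  show "mono_on {0..1} f" by (rule m)
  show "\<And>x. x \<notin> {0..1} \<Longrightarrow> f x = x" by (rule out)
  obtain t where t: "t \<in> {0..1}" "f t = 0" using im by (metis atLeastAtMost_iff image_iff order_refl zero_le_one)
  have "f 0 \<le> f t" using mono_onD[OF m, of 0 t] t by auto
  moreover have "f 0 \<in> {0..1}" using im by auto
  ultimately show "f 0 = 0" using t by auto
  obtain s where s: "s \<in> {0..1}" "f s = 1" using im by (metis atLeastAtMost_iff image_iff order_refl zero_le_one)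
  have "f s \<le> f 1" using mono_onD[OF m, of s 1] s by auto
  moreover have "f 1 \<in> {0..1}" using im by auto
  ultimately show "f 1 = 1" using s by auto
qed

lemma PLO_range01: assumes "f \<in> PLO_homeos" "x \<in> {0..1}" shows "f x \<in> {0..1}"
  using PLO_basic(3)[OF assms(1)] assms(2) by blast

lemma PLO_strict_mono:
  assumes "f \<in> PLO_homeos" shows "strict_mono f"
proof (rule strict_monoI)
  fix x y :: real assume xy: "x < y"
  note b = PLO_basic[OF assms]
  show "f x < f y"
  proof (cases "x \<in> {0..1} \<and> y \<in> {0..1}")
    case True
    then have "f x \<le> f y" using mono_onD[OF b(6), of x y] xy by auto
    moreover have "f x \<noteq> f y" using b(5) True xy by (metis inj_onD less_irrefl)
    ultimately show ?thesis by simp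
  next
    case False
    then show ?thesis
    proof (cases "x \<in> {0..1}")
      case True
      then have "y > 1" using False xy by auto
      then show ?thesis using b(7)[of y] PLO_range01[OF assms True] by auto
    next
      case xo: False
      show ?thesis
      proof (cases "y \<in> {0..1}")
        case True
        then have "x < 0" using xo xy by auto
        then show ?thesis using b(7)[of x] PLO_range01[OF assms True] by auto
      next
        case False
        then show ?thesis using b(7)[of x] b(7)[of y] xo xy by auto
      qed
    qed
  qed
qed

lemma PLO_cont:
  assumes "f \<in> PLO_homeos" shows "continuous_on UNIV f"
proof -
  note b = PLO_basic[OF assms]
  have c1: "continuous_on {..0} f"
  proof (rule continuous_on_eq[OF continuous_on_id])
    fix x :: real assume "x \<in> {..0}" then show "x = f x" using b(1) b(7)[of x] by (cases "x = 0") auto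
  qed
  have c2: "continuous_on {1..} f"
  proof (rule continuous_on_eq[OF continuous_on_id])
    fix x :: real assume "x \<in> {1..}" then show "x = f x" using b(2) b(7)[of x] by (cases "x = 1") auto
  qed
  have "continuous_on ({..0} \<union> {0..1} \<union> {1..}) f"
    by (intro continuous_on_closed_Un c1 c2 b(4)) auto
  moreover have "{..0} \<union> {0..1} \<union> {1..} = (UNIV :: real set)" by auto
  ultimately show ?thesis by simp
qed

lemma PLO_isCont: assumes "f \<in> PLO_homeos" shows "isCont f x"
  using PLO_cont[OF assms] by (simp add: continuous_on_eq_continuous_at)

lemma PLO_right_affine:
  assumes "f \<in> PLO_homeos"
  shows "\<exists>e>0. \<exists>a b. \<forall>t. p \<le> t \<and> t \<le> p + e \<longrightarrow> f t = a * t + b"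
proof -
  note bb = PLO_basic[OF assms]
  consider "p < 0" | "p \<ge> 1" | "0 \<le> p \<and> p < 1" by linarith
  then show ?thesis
  proof cases
    case 1
    show ?thesis
      by (rule exI[of _ "-p/2"], rule conjI, use 1 in simp, rule exI[of _ 1], rule exI[of _ 0], use 1 bb(7) in auto)
  next
    case 2
    show ?thesis
    proof (rule exI[of _ 1], rule conjI, simp, rule exI[of _ 1], rule exI[of _ 0], intro allI impI)
      fix t assume "p \<le> t \<and> t \<le> p + 1"
      then show "f t = 1 * t + 0" using 2 bb(2) bb(7)[of t] by (cases "t = 1") auto
    qed
  next
    case 3
    have "pl_on_unit f" using assms unfolding PLO_homeos_def by simp
    then obtain S where S: "finite S" "{0,1} \<subseteq> S" "S \<subseteq> {0..1}"
      and aff: "\<forall>x\<in>S. \<forall>y\<in>S. x < y \<and> {x<..<y} \<inter> S = {} \<longrightarrow> (\<exists>a b. \<forall>t\<in>{x..y}. f t = a * t + b)"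
      unfolding pl_on_unit_def by blast
    define Q where "Q = {s\<in>S. s > p}"
    define R where "R = {s\<in>S. s \<le> p}"
    have Qf: "finite Q" "Q \<noteq> {}" unfolding Q_def using S 3 by auto
    have Rf: "finite R" "R \<noteq> {}" unfolding R_def using S 3 by auto
    define q where "q = Min Q"
    define r where "r = Max R"
    have q: "q \<in> S" "q > p" "\<And>s. s \<in> S \<Longrightarrow> s > p \<Longrightarrow> q \<le> s"
      using Min_in[OF Qf] Min_le[OF Qf(1)] unfolding q_def Q_def by auto
    have r: "r \<in> S" "r \<le> p" "\<And>s. s \<in> S \<Longrightarrow> s \<le> p \<Longrightarrow> s \<le> r"
      using Max_in[OF Rf] Max_ge[OF Rf(1)] unfolding r_def R_def by auto
    have "{r<..<q} \<inter> S = {}"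
    proof (rule ccontr)
      assume "{r<..<q} \<inter> S \<noteq> {}"
      then obtain s where "s \<in> S" "r < s" "s < q" by auto
      then show False using q(3) r(3) by (cases "s \<le> p") force+
    qed
    moreover have "r < q" using r q by linarith
    ultimately obtain a b where ab: "\<forall>t\<in>{r..q}. f t = a * t + b" using aff r(1) q(1) by blast
    show ?thesis
      by (rule exI[of _ "q - p"], use q r ab in auto)
  qed
qed

lemma PLO_left_affine:
  assumes "f \<in> PLO_homeos"
  shows "\<exists>e>0. \<exists>a b. \<forall>t. p - e \<le> t \<and> t \<le> p \<longrightarrow> f t = a * t + b"
proof -
  note bb = PLO_basic[OF assms]
  consider "p > 1" | "p \<le> 0" | "0 < p \<and> p \<le> 1" by linarith
  then show ?thesis
  proof cases
    case 1
    show ?thesis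
      proof (rule exI[of _ "(p-1)/2"], rule conjI, use 1 in simp, rule exI[of _ 1], rule exI[of _ 0], intro allI impI)
      fix t assume "p - (p - 1) / 2 \<le> t \<and> t \<le> p"
      then have "t > 1" using 1 by (simp add: field_simps)
      then show "f t = 1 * t + 0" using bb(7)[of t] by auto
    qed
  next
    case 2
    show ?thesis
    proof (rule exI[of _ 1], rule conjI, simp, rule exI[of _ 1], rule exI[of _ 0], intro allI impI)
      fix t assume "p - 1 \<le> t \<and> t \<le> p"
      then show "f t = 1 * t + 0" using 2 bb(1) bb(7)[of t] by (cases "t = 0") auto
    qed
  next
    case 3
    have "pl_on_unit f" using assms unfolding PLO_homeos_def by simp
    then obtain S where S: "finite S" "{0,1} \<subseteq> S" "S \<subseteq> {0..1}"
      and aff: "\<forall>x\<in>S. \<forall>y\<in>S. x < y \<and> {x<..<y} \<inter> S = {} \<longrightarrow> (\<exists>a b. \<forall>t\<in>{x..y}. f t = a * t + b)"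
      unfolding pl_on_unit_def by blast
    define Q where "Q = {s\<in>S. s \<ge> p}"
    define R where "R = {s\<in>S. s < p}"
    have Qf: "finite Q" "Q \<noteq> {}" unfolding Q_def using S 3 by auto
    have Rf: "finite R" "R \<noteq> {}" unfolding R_def using S 3 by auto
    define q where "q = Min Q"
    define r where "r = Max R"
    have q: "q \<in> S" "q \<ge> p" "\<And>s. s \<in> S \<Longrightarrow> s \<ge> p \<Longrightarrow> q \<le> s"
      using Min_in[OF Qf] Min_le[OF Qf(1)] unfolding q_def Q_def by auto
    have r: "r \<in> S" "r < p" "\<And>s. s \<in> S \<Longrightarrow> s < p \<Longrightarrow> s \<le> r"
      using Max_in[OF Rf] Max_ge[OF Rf(1)] unfolding r_def R_def by auto
    have "{r<..<q} \<inter> S = {}"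
    proof (rule ccontr)
      assume "{r<..<q} \<inter> S \<noteq> {}"
      then obtain s where "s \<in> S" "r < s" "s < q" by auto
      then show False using q(3) r(3) by (cases "s < p") force+
    qed
    moreover have "r < q" using r q by linarith
    ultimately obtain a b where ab: "\<forall>t\<in>{r..q}. f t = a * t + b" using aff r(1) q(1) by blast
    show ?thesis
      by (rule exI[of _ "p - r"], use q r ab in auto)
  qed
qed

lemma PLO_eps:
  assumes "f \<in> PLO_homeos" "e > 0"
  shows "\<exists>d>0. \<forall>t. \<bar>t - p\<bar> < d \<longrightarrow> \<bar>f t - f p\<bar> < e"
proof -
  have "f \<midarrow>p\<rightarrow> f p" using PLO_isCont[OF assms(1)] by (simp add: isCont_def)
  from LIM_D[OF this assms(2)] obtain d where d: "d > 0"
    "\<forall>x. x \<noteq> p \<and> norm (x - p) < d \<longrightarrow> norm (f x - f p) < e" by blast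
  show ?thesis
  proof (intro exI[of _ d] conjI allI impI)
    fix t assume "\<bar>t - p\<bar> < d"
    then show "\<bar>f t - f p\<bar> < e" using d assms(2) by (cases "t = p") auto
  qed (rule d(1))
qed

lemma PLO_mono: assumes "f \<in> PLO_homeos" "x \<le> y" shows "f x \<le> f y"
  using PLO_strict_mono[OF assms(1)] assms(2) by (metis order_le_less strict_mono_less)

lemma PLO_less_iff: assumes "f \<in> PLO_homeos" shows "f x < f y \<longleftrightarrow> x < y"
  using PLO_strict_mono[OF assms(1)] by (simp add: strict_mono_less)

lemma PLO_le_iff: assumes "f \<in> PLO_homeos" shows "f x \<le> f y \<longleftrightarrow> x \<le> y"
  using PLO_strict_mono[OF assms(1)] by (simp add: strict_mono_less_eq)

lemma PLO_inj_iff: assumes "f \<in> PLO_homeos" shows "f x = f y \<longleftrightarrow> x = y"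
  using PLO_strict_mono[OF assms(1)] by (metis strict_mono_eq)

lemma aff_comm:
  fixes a1 b1 a2 b2 p t :: real
  assumes "a1*p+b1 = p" "a2*p+b2 = p"
  shows "a1*(a2*t+b2)+b1 = a2*(a1*t+b1)+b2"
proof -
  have "b1 = p - a1*p" "b2 = p - a2*p" using assms by auto
  then show ?thesis by (simp add: algebra_simps del: diff_eq_eq eq_diff_eq)
qed

lemma PLO_local_commute:
  assumes f: "f \<in> PLO_homeos" and h: "h \<in> PLO_homeos" and fp: "f p = p" and hp: "h p = p"
  shows "\<exists>d>0. \<forall>t. \<bar>t - p\<bar> < d \<longrightarrow> f (h t) = h (f t)"
proof -
  obtain e1 a1 b1 where e1: "e1 > 0" "\<forall>t. p \<le> t \<and> t \<le> p + e1 \<longrightarrow> f t = a1 * t + b1"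
    using PLO_right_affine[OF f] by blast
  obtain e2 a2 b2 where e2: "e2 > 0" "\<forall>t. p \<le> t \<and> t \<le> p + e2 \<longrightarrow> h t = a2 * t + b2"
    using PLO_right_affine[OF h] by blast
  obtain e3 a3 b3 where e3: "e3 > 0" "\<forall>t. p - e3 \<le> t \<and> t \<le> p \<longrightarrow> f t = a3 * t + b3"
    using PLO_left_affine[OF f] by blast
  obtain e4 a4 b4 where e4: "e4 > 0" "\<forall>t. p - e4 \<le> t \<and> t \<le> p \<longrightarrow> h t = a4 * t + b4"
    using PLO_left_affine[OF h] by blast
  define e where "e = min (min e1 e2) (min e3 e4)"
  have e: "e > 0" "e \<le> e1" "e \<le> e2" "e \<le> e3" "e \<le> e4" using e1 e2 e3 e4 unfolding e_def by auto
  obtain d1 where d1: "d1 > 0" "\<forall>t. \<bar>t - p\<bar> < d1 \<longrightarrow> \<bar>f t - f p\<bar> < e" using PLO_eps[OF f e(1)] by blast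
  obtain d2 where d2: "d2 > 0" "\<forall>t. \<bar>t - p\<bar> < d2 \<longrightarrow> \<bar>h t - h p\<bar> < e" using PLO_eps[OF h e(1)] by blast
  define d where "d = min (min d1 d2) e"
  have d: "d > 0" "d \<le> d1" "d \<le> d2" "d \<le> e" using d1 d2 e unfolding d_def by auto
  have p1: "a1*p+b1 = p" using e1 fp by force
  have p2: "a2*p+b2 = p" using e2 hp by force
  have p3: "a3*p+b3 = p" using e3 fp by force
  have p4: "a4*p+b4 = p" using e4 hp by force
  show ?thesis
  proof (intro exI[of _ d] conjI allI impI)
    fix t assume t: "\<bar>t - p\<bar> < d"
    have ft: "\<bar>f t - p\<bar> < e" using d1 d t fp by auto
    have ht: "\<bar>h t - p\<bar> < e" using d2 d t hp by auto
    show "f (h t) = h (f t)"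
    proof (cases "p \<le> t")
      case True
      have "h t \<ge> p" "f t \<ge> p" using PLO_mono[OF h True] PLO_mono[OF f True] fp hp by auto
      then have "f (h t) = a1 * (a2 * t + b2) + b1" "h (f t) = a2 * (a1 * t + b1) + b2"
        using e1(2)[rule_format, of "h t"] e2(2)[rule_format, of "f t"] e2(2)[rule_format, of t]
          e1(2)[rule_format, of t] ht ft e t d True by auto
      then show ?thesis using aff_comm[OF p1 p2] by simp
    next
      case False
      then have F: "t \<le> p" by simp
      have "h t \<le> p" "f t \<le> p" using PLO_mono[OF h F] PLO_mono[OF f F] fp hp by auto
      then have "f (h t) = a3 * (a4 * t + b4) + b3" "h (f t) = a4 * (a3 * t + b3) + b4"
        using e3(2)[rule_format, of "h t"] e4(2)[rule_format, of "f t"] e4(2)[rule_format, of t]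
          e3(2)[rule_format, of t] ht ft e t d F by auto
      then show ?thesis using aff_comm[OF p3 p4] by simp
    qed
  qed (rule d(1))
qed




lemma theta_exists:
  assumes G: "group G" and N: "N \<lhd> Kg" and phi: "\<phi> \<in> iso G (Kg Mod N)"
  obtains \<theta> where "\<theta> \<in> hom Kg G" "\<theta> ` carrier Kg = carrier G"
    "\<And>k. k \<in> carrier Kg \<Longrightarrow> \<theta> k = \<one>\<^bsub>G\<^esub> \<longleftrightarrow> k \<in> N"
proof -
  interpret N: normal N Kg by (rule N)
  interpret Q: group "Kg Mod N" by (rule N.factorgroup_is_group)
  define \<psi> where "\<psi> = inv_into (carrier G) \<phi>"
  have psi: "\<psi> \<in> iso (Kg Mod N) G" unfolding \<psi>_def using group.iso_set_sym[OF G phi] .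
  have gh: "group_hom (Kg Mod N) G \<psi>"
    using psi G by (simp add: group_hom_def group_hom_axioms_def iso_def Q.group_axioms)
  have pi: "(\<lambda>a. N #>\<^bsub>Kg\<^esub> a) \<in> hom Kg (Kg Mod N)" by (rule N.r_coset_hom_Mod)
  define \<theta> where "\<theta> = (\<lambda>k. \<psi> (N #>\<^bsub>Kg\<^esub> k))"
  have th: "\<theta> \<in> hom Kg G"
    using hom_compose[OF pi iso_imp_homomorphism[OF psi]] unfolding \<theta>_def compose_def
    by (simp add: hom_def comp_def)
  have surjpi: "(\<lambda>a. N #>\<^bsub>Kg\<^esub> a) ` carrier Kg = carrier (Kg Mod N)"
    by (auto simp: FactGroup_def RCOSETS_def)
  have "\<psi> ` carrier (Kg Mod N) = carrier G" using psi by (simp add: iso_def bij_betw_def)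
  hence surj: "\<theta> ` carrier Kg = carrier G" using surjpi unfolding \<theta>_def by (metis image_image)
  have ker: "\<theta> k = \<one>\<^bsub>G\<^esub> \<longleftrightarrow> k \<in> N" if k: "k \<in> carrier Kg" for k
  proof -
    have inj: "inj_on \<psi> (carrier (Kg Mod N))" using psi by (simp add: iso_def bij_betw_def)
    have c: "N #>\<^bsub>Kg\<^esub> k \<in> carrier (Kg Mod N)" using surjpi k by blast
    have "\<theta> k = \<one>\<^bsub>G\<^esub> \<longleftrightarrow> N #>\<^bsub>Kg\<^esub> k = N"
      unfolding \<theta>_def using inj_onD[OF inj _ c Q.one_closed] group_hom.hom_one[OF gh] by auto
    also have "\<dots> \<longleftrightarrow> k \<in> N"
      using N.rcos_const[OF N.is_group] N.rcos_self[OF k N.subgroup_axioms] by metis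
    finally show ?thesis .
  qed
  show ?thesis using that th surj ker by blast
qed

lemma main_transfer:
  fixes G (structure)
  assumes G: "group G" and K: "group Kg" and th: "\<theta> \<in> hom Kg G"
    and surj: "\<theta> ` carrier Kg = carrier G"
    and ker: "\<And>k. k \<in> carrier Kg \<Longrightarrow> \<theta> k = \<one> \<longleftrightarrow> k \<in> N"
    and L: "L \<lhd> Kg" and LN: "\<not> L \<subseteq> N"
    and push: "\<And>Ga Gb. finite Ga \<Longrightarrow> Ga \<subseteq> L \<Longrightarrow> finite Gb \<Longrightarrow> Gb \<subseteq> L \<Longrightarrow>
       \<exists>g\<in>carrier Kg. \<forall>a\<in>generate Kg Ga. \<forall>b\<in>generate Kg Gb.
         \<theta> ((g \<otimes>\<^bsub>Kg\<^esub> a \<otimes>\<^bsub>Kg\<^esub> inv\<^bsub>Kg\<^esub> g) \<otimes>\<^bsub>Kg\<^esub> b) = \<theta> (b \<otimes>\<^bsub>Kg\<^esub> (g \<otimes>\<^bsub>Kg\<^esub> a \<otimes>\<^bsub>Kg\<^esub> inv\<^bsub>Kg\<^esub> g))"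
  shows "\<exists>H. H \<lhd> G \<and> H \<noteq> {\<one>} \<and>
           (\<forall>A B. A \<subseteq> H \<and> B \<subseteq> H \<and> subgroup A G \<and> subgroup B G \<and>
                  fin_gen G A \<and> fin_gen G B \<longrightarrow>
              (\<exists>g\<in>carrier G. \<forall>a\<in>A. \<forall>b\<in>B.
                 (g \<otimes> a \<otimes> inv g) \<otimes> b = b \<otimes> (g \<otimes> a \<otimes> inv g)))"
proof -
  have gh: "group_hom Kg G \<theta>" using G K th by (simp add: group_hom_def group_hom_axioms_def)
  have Lsub: "subgroup L Kg" using L by (rule normal_imp_subgroup)
  have LK: "L \<subseteq> carrier Kg" using Lsub by (rule subgroup.subset)
  define H where "H = \<theta> ` L"
  have Hsub: "subgroup H G" unfolding H_def using group_hom.subgroup_img_is_subgroup[OF gh Lsub] .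
  have Hn: "H \<lhd> G"
  proof (rule group.normal_invI[OF G Hsub])
    fix x h assume x: "x \<in> carrier G" and h: "h \<in> H"
    obtain g where g: "g \<in> carrier Kg" "x = \<theta> g" using x surj by blast
    obtain l where l: "l \<in> L" "h = \<theta> l" using h H_def by blast
    have "g \<otimes>\<^bsub>Kg\<^esub> l \<otimes>\<^bsub>Kg\<^esub> inv\<^bsub>Kg\<^esub> g \<in> L"
      using group.normal_invE(2)[OF K L g(1) l(1)] .
    moreover have "\<theta> (g \<otimes>\<^bsub>Kg\<^esub> l \<otimes>\<^bsub>Kg\<^esub> inv\<^bsub>Kg\<^esub> g) = x \<otimes> h \<otimes> inv x"
      using g l LK group_hom.hom_mult[OF gh] group_hom.hom_inv[OF gh] group.inv_closed[OF K]
        monoid.m_closed[OF group.is_monoid[OF K]] by auto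
    ultimately show "x \<otimes> h \<otimes> inv x \<in> H" unfolding H_def by force
  qed
  have Hne: "H \<noteq> {\<one>}"
  proof
    assume "H = {\<one>}"
    obtain l where "l \<in> L" "l \<notin> N" using LN by blast
    then show False using ker LK \<open>H = {\<one>}\<close> unfolding H_def by blast
  qed
  have lift: "\<exists>Ga. finite Ga \<and> Ga \<subseteq> L \<and> \<theta> ` generate Kg Ga = A"
    if A1: "A \<subseteq> H" and A2: "fin_gen G A" for A
  proof -
    obtain S where S: "finite S" "S \<subseteq> carrier G" "A = generate G S"
      using A2 unfolding fin_gen_def by blast
    have SA: "S \<subseteq> A" using S(3) generate.incl[of _ S G] by blast
    have "\<forall>s\<in>S. \<exists>l. l \<in> L \<and> \<theta> l = s" using SA A1 unfolding H_def by blast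
    then obtain f where f: "\<And>s. s \<in> S \<Longrightarrow> f s \<in> L \<and> \<theta> (f s) = s" by metis
    have fS: "f ` S \<subseteq> L" using f by blast
    have im: "\<theta> ` f ` S = S" using f by force
    have "\<theta> ` generate Kg (f ` S) = generate G (\<theta> ` f ` S)"
      using group_hom.generate_img[OF gh, of "f ` S"] fS LK by auto
    then show ?thesis using S fS im by (intro exI[of _ "f ` S"]) auto
  qed
  have "\<exists>g\<in>carrier G. \<forall>a\<in>A. \<forall>b\<in>B. (g \<otimes> a \<otimes> inv g) \<otimes> b = b \<otimes> (g \<otimes> a \<otimes> inv g)"
    if AB: "A \<subseteq> H" "B \<subseteq> H" "fin_gen G A" "fin_gen G B" for A B
  proof -
    obtain Ga where Ga: "finite Ga" "Ga \<subseteq> L" "\<theta> ` generate Kg Ga = A" using lift[OF AB(1) AB(3)] by blast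
    obtain Gb where Gb: "finite Gb" "Gb \<subseteq> L" "\<theta> ` generate Kg Gb = B" using lift[OF AB(2) AB(4)] by blast
    obtain g where g: "g \<in> carrier Kg" and gp: "\<forall>a\<in>generate Kg Ga. \<forall>b\<in>generate Kg Gb.
         \<theta> ((g \<otimes>\<^bsub>Kg\<^esub> a \<otimes>\<^bsub>Kg\<^esub> inv\<^bsub>Kg\<^esub> g) \<otimes>\<^bsub>Kg\<^esub> b) = \<theta> (b \<otimes>\<^bsub>Kg\<^esub> (g \<otimes>\<^bsub>Kg\<^esub> a \<otimes>\<^bsub>Kg\<^esub> inv\<^bsub>Kg\<^esub> g))"
      using push[OF Ga(1,2) Gb(1,2)] by blast
    have gaK: "generate Kg Ga \<subseteq> carrier Kg" using group.generate_in_carrier[OF K] Ga(2) LK by blast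
    have gbK: "generate Kg Gb \<subseteq> carrier Kg" using group.generate_in_carrier[OF K] Gb(2) LK by blast
    show ?thesis
    proof (intro bexI[of _ "\<theta> g"] ballI)
      show "\<theta> g \<in> carrier G" using g th by (simp add: hom_def Pi_def)
      fix a b assume a: "a \<in> A" and b: "b \<in> B"
      obtain a' where a': "a' \<in> generate Kg Ga" "a = \<theta> a'" using a Ga(3) by blast
      obtain b' where b': "b' \<in> generate Kg Gb" "b = \<theta> b'" using b Gb(3) by blast
      have aK: "a' \<in> carrier Kg" and bK: "b' \<in> carrier Kg" using a' b' gaK gbK by auto
      define x where "x = g \<otimes>\<^bsub>Kg\<^esub> a' \<otimes>\<^bsub>Kg\<^esub> inv\<^bsub>Kg\<^esub> g"
      have igK: "inv\<^bsub>Kg\<^esub> g \<in> carrier Kg" using group.inv_closed[OF K g] .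
      have gaK': "g \<otimes>\<^bsub>Kg\<^esub> a' \<in> carrier Kg" using monoid.m_closed[OF group.is_monoid[OF K] g aK] .
      have xK: "x \<in> carrier Kg" unfolding x_def using monoid.m_closed[OF group.is_monoid[OF K] gaK' igK] .
      have thx: "\<theta> x = \<theta> g \<otimes> a \<otimes> inv \<theta> g"
        unfolding x_def using group_hom.hom_mult[OF gh gaK' igK] group_hom.hom_mult[OF gh g aK]
          group_hom.hom_inv[OF gh g] a'(2) by simp
      have "\<theta> (x \<otimes>\<^bsub>Kg\<^esub> b') = \<theta> (b' \<otimes>\<^bsub>Kg\<^esub> x)" using gp a'(1) b'(1) unfolding x_def by blast
      then have "\<theta> x \<otimes> \<theta> b' = \<theta> b' \<otimes> \<theta> x"
        using group_hom.hom_mult[OF gh xK bK] group_hom.hom_mult[OF gh bK xK] by simp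
      then show "\<theta> g \<otimes> a \<otimes> inv \<theta> g \<otimes> b = b \<otimes> (\<theta> g \<otimes> a \<otimes> inv \<theta> g)"
        using thx b'(2) by simp
    qed
  qed
  then show ?thesis using Hn Hne by blast
qed




definition spt :: "(real \<Rightarrow> real) \<Rightarrow> real set" where "spt k = {t. k t \<noteq> t}"

locale plk =
  fixes Kg :: "(real \<Rightarrow> real) monoid" (structure)
  assumes grp: "group Kg" and subP: "carrier Kg \<subseteq> PLO_homeos"
    and mulK: "mult Kg = (\<lambda>f g. f \<circ> g)" and oneK: "one Kg = id"
begin

sublocale group Kg by (rule grp)

lemma inP: "f \<in> carrier Kg \<Longrightarrow> f \<in> PLO_homeos" using subP by blast

lemma mult_app [simp]: "(f \<otimes> g) t = f (g t)" by (simp add: mulK)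
lemma one_app [simp]: "\<one> t = t" by (simp add: oneK)

lemma inv_app [simp]:
  assumes "f \<in> carrier Kg" shows "f ((inv f) t) = t" "(inv f) (f t) = t"
proof -
  have "f \<otimes> inv f = \<one>" "inv f \<otimes> f = \<one>" using assms by auto
  then show "f ((inv f) t) = t" "(inv f) (f t) = t" by (metis mult_app one_app)+
qed

definition Fix where "Fix = {p. \<forall>g\<in>carrier Kg. g p = p}"
definition Cc where "Cc k \<longleftrightarrow> (\<forall>p\<in>Fix. \<exists>d>0. \<forall>t. \<bar>t - p\<bar> < d \<longrightarrow> k t = t)"
definition orb where "orb y = {t. \<exists>g\<in>carrier Kg. \<exists>h\<in>carrier Kg. g y < t \<and> t < h y}"
definition Orb where "Orb Xs = (\<Union>x\<in>Xs. orb x)"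
definition LX where "LX Xs = {k\<in>carrier Kg. Cc k \<and> spt k \<subseteq> Orb Xs}"

lemma less_iff: "g \<in> carrier Kg \<Longrightarrow> g x < g y \<longleftrightarrow> x < y" using PLO_less_iff inP by blast
lemma le_iff: "g \<in> carrier Kg \<Longrightarrow> g x \<le> g y \<longleftrightarrow> x \<le> y" using PLO_le_iff inP by blast
lemma eq_iff: "g \<in> carrier Kg \<Longrightarrow> g x = g y \<longleftrightarrow> x = y" using PLO_inj_iff inP by blast

lemma orb_inv: assumes "g \<in> carrier Kg" "t \<in> orb y" shows "g t \<in> orb y"
proof -
  obtain g1 h1 where "g1 \<in> carrier Kg" "h1 \<in> carrier Kg" "g1 y < t" "t < h1 y"
    using assms(2) unfolding orb_def by blast
  then have "(g \<otimes> g1) y < g t" "g t < (g \<otimes> h1) y" "g \<otimes> g1 \<in> carrier Kg" "g \<otimes> h1 \<in> carrier Kg"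
    using less_iff[OF assms(1)] assms(1) by auto
  then show ?thesis unfolding orb_def by blast
qed

lemma moved_both: assumes "g \<in> carrier Kg" "g y \<noteq> y"
  shows "\<exists>g1\<in>carrier Kg. \<exists>h1\<in>carrier Kg. g1 y < y \<and> y < h1 y"
proof (cases "g y < y")
  case True
  have "(inv g) y > y"
  proof (rule ccontr)
    assume "\<not> (inv g) y > y"
    then have "g ((inv g) y) \<le> g y" using le_iff[OF assms(1)] by simp
    then show False using True assms by simp
  qed
  then show ?thesis using True assms by auto
next
  case False
  then have gy: "g y > y" using assms(2) by simp
  have "(inv g) y < y"
  proof (rule ccontr)
    assume "\<not> (inv g) y < y"
    then have "g ((inv g) y) \<ge> g y" using le_iff[OF assms(1)] by simp
    then show False using gy assms by simp
  qed
  then show ?thesis using gy assms by auto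
qed

lemma orb_self: assumes "y \<notin> Fix" shows "y \<in> orb y"
  using assms moved_both unfolding Fix_def orb_def by blast

lemma fix_notin_orb: assumes "p \<in> Fix" shows "p \<notin> orb y"
proof
  assume "p \<in> orb y"
  then obtain g h where gh: "g \<in> carrier Kg" "h \<in> carrier Kg" "g y < p" "p < h y"
    unfolding orb_def by blast
  have "g p = p" "h p = p" using assms gh unfolding Fix_def by auto
  then have "y < p" "p < y" using gh less_iff by metis+
  then show False by simp
qed

lemma orb_sub: assumes "t \<in> orb y" shows "orb t \<subseteq> orb y"
proof
  fix s assume "s \<in> orb t"
  then obtain g h where gh: "g \<in> carrier Kg" "h \<in> carrier Kg" "g t < s" "s < h t"
    unfolding orb_def by blast
  obtain g1 h1 where g1: "g1 \<in> carrier Kg" "h1 \<in> carrier Kg" "g1 y < t" "t < h1 y"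
    using assms unfolding orb_def by blast
  have "(g \<otimes> g1) y < s" using less_iff[OF gh(1)] g1 gh by (metis mult_app order.strict_trans)
  moreover have "s < (h \<otimes> h1) y" using less_iff[OF gh(2)] g1 gh by (metis mult_app order.strict_trans)
  ultimately show "s \<in> orb y" using gh g1 unfolding orb_def by blast
qed

lemma orb_eq: assumes "t \<in> orb y" shows "orb t = orb y"
proof
  show "orb t \<subseteq> orb y" using orb_sub[OF assms] .
  obtain g1 h1 where g1: "g1 \<in> carrier Kg" "h1 \<in> carrier Kg" "g1 y < t" "t < h1 y"
    using assms unfolding orb_def by blast
  have "(inv h1) t < y" using less_iff[OF g1(2), of "(inv h1) t" y] g1 by simp
  moreover have "y < (inv g1) t" using less_iff[OF g1(1), of y "(inv g1) t"] g1 by simp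
  ultimately have "y \<in> orb t" using g1 unfolding orb_def by blast
  then show "orb y \<subseteq> orb t" by (rule orb_sub)
qed

lemma orb_open: "open (orb y)"
proof -
  have "orb y = (\<Union>g\<in>carrier Kg. \<Union>h\<in>carrier Kg. {g y<..<h y})" unfolding orb_def by auto
  then show ?thesis by (auto intro!: open_UN)
qed

lemma orb_01: "orb y \<subseteq> {0..1}"
proof
  fix t assume t: "t \<in> orb y"
  then obtain g h where gh: "g \<in> carrier Kg" "h \<in> carrier Kg" "g y < t" "t < h y"
    unfolding orb_def by blast
  show "t \<in> {0..1}"
  proof (cases "y \<in> {0..1}")
    case True
    then show ?thesis using PLO_range01[OF inP[OF gh(1)] True] PLO_range01[OF inP[OF gh(2)] True] gh by auto
  next
    case False
    then show ?thesis using PLO_basic(7)[OF inP[OF gh(1)] False] PLO_basic(7)[OF inP[OF gh(2)] False] gh by auto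
  qed
qed

lemma Fix_inv: "p \<in> Fix \<Longrightarrow> g \<in> carrier Kg \<Longrightarrow> g p = p" unfolding Fix_def by auto

lemma Cc_one: "Cc \<one>" unfolding Cc_def by (auto intro!: exI[of _ "1::real"])

lemma Cc_mult: assumes "Cc f" "Cc g" shows "Cc (f \<otimes> g)"
  unfolding Cc_def
proof
  fix p assume p: "p \<in> Fix"
  obtain d1 where d1: "d1 > 0" "\<forall>t. \<bar>t - p\<bar> < d1 \<longrightarrow> f t = t" using assms(1) p unfolding Cc_def by blast
  obtain d2 where d2: "d2 > 0" "\<forall>t. \<bar>t - p\<bar> < d2 \<longrightarrow> g t = t" using assms(2) p unfolding Cc_def by blast
  show "\<exists>d>0. \<forall>t. \<bar>t - p\<bar> < d \<longrightarrow> (f \<otimes> g) t = t"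
    by (rule exI[of _ "min d1 d2"]) (use d1 d2 in auto)
qed

lemma Cc_inv: assumes "f \<in> carrier Kg" "Cc f" shows "Cc (inv f)"
  unfolding Cc_def
proof
  fix p assume p: "p \<in> Fix"
  obtain d1 where d1: "d1 > 0" "\<forall>t. \<bar>t - p\<bar> < d1 \<longrightarrow> f t = t" using assms(2) p unfolding Cc_def by blast
  show "\<exists>d>0. \<forall>t. \<bar>t - p\<bar> < d \<longrightarrow> (inv f) t = t"
  proof (rule exI[of _ d1], intro conjI allI impI)
    fix t assume "\<bar>t - p\<bar> < d1"
    then have "f t = t" using d1 by auto
    then show "(inv f) t = t" using inv_app(2)[OF assms(1), of t] by simp
  qed (rule d1(1))
qed

lemma Cc_conj: assumes g: "g \<in> carrier Kg" and "Cc k" shows "Cc (g \<otimes> k \<otimes> inv g)"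
  unfolding Cc_def
proof
  fix p assume p: "p \<in> Fix"
  obtain d1 where d1: "d1 > 0" "\<forall>t. \<bar>t - p\<bar> < d1 \<longrightarrow> k t = t" using assms(2) p unfolding Cc_def by blast
  have ig: "inv g \<in> carrier Kg" using g by simp
  have igp: "(inv g) p = p" using Fix_inv[OF p ig] .
  obtain d where d: "d > 0" "\<forall>t. \<bar>t - p\<bar> < d \<longrightarrow> \<bar>(inv g) t - (inv g) p\<bar> < d1"
    using PLO_eps[OF inP[OF ig] d1(1)] by blast
  show "\<exists>d>0. \<forall>t. \<bar>t - p\<bar> < d \<longrightarrow> (g \<otimes> k \<otimes> inv g) t = t"
  proof (rule exI[of _ d], intro conjI allI impI)
    fix t assume "\<bar>t - p\<bar> < d"
    then have "k ((inv g) t) = (inv g) t" using d d1 igp by auto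
    then show "(g \<otimes> k \<otimes> inv g) t = t" using g by simp
  qed (rule d(1))
qed

lemma spt_mult: "spt (f \<otimes> g) \<subseteq> spt f \<union> spt g" unfolding spt_def by auto
lemma spt_inv: "f \<in> carrier Kg \<Longrightarrow> spt (inv f) = spt f" unfolding spt_def by (metis inv_app)
lemma spt_one: "spt \<one> = {}" unfolding spt_def by auto

lemma Orb_inv: "g \<in> carrier Kg \<Longrightarrow> t \<in> Orb Xs \<Longrightarrow> g t \<in> Orb Xs"
  unfolding Orb_def using orb_inv by blast

lemma spt_conj: assumes g: "g \<in> carrier Kg" and "spt k \<subseteq> Orb Xs" shows "spt (g \<otimes> k \<otimes> inv g) \<subseteq> Orb Xs"
proof
  fix t assume "t \<in> spt (g \<otimes> k \<otimes> inv g)"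
  then have "k ((inv g) t) \<noteq> (inv g) t" using g unfolding spt_def by auto
  then have "(inv g) t \<in> Orb Xs" using assms(2) unfolding spt_def by auto
  then have "g ((inv g) t) \<in> Orb Xs" using Orb_inv g by blast
  then show "t \<in> Orb Xs" using g by simp
qed

lemma LX_normal: "LX Xs \<lhd> Kg"
proof (rule normal_invI)
  show "subgroup (LX Xs) Kg"
  proof (rule subgroupI)
    show "LX Xs \<subseteq> carrier Kg" unfolding LX_def by auto
    show "LX Xs \<noteq> {}" using Cc_one spt_one unfolding LX_def by auto
    fix a b assume a: "a \<in> LX Xs" and b: "b \<in> LX Xs"
    show "inv a \<in> LX Xs" using a Cc_inv spt_inv unfolding LX_def by auto
    show "a \<otimes> b \<in> LX Xs" using a b Cc_mult spt_mult unfolding LX_def by blast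
  qed
  fix x h assume "x \<in> carrier Kg" "h \<in> LX Xs"
  then show "x \<otimes> h \<otimes> inv x \<in> LX Xs" using Cc_conj spt_conj unfolding LX_def by auto
qed


lemma comm_Cc: assumes f: "f \<in> carrier Kg" and h: "h \<in> carrier Kg"
  shows "Cc (f \<otimes> h \<otimes> inv f \<otimes> inv h)"
  unfolding Cc_def
proof
  fix p assume p: "p \<in> Fix"
  obtain d where d: "d > 0" "\<forall>t. \<bar>t - p\<bar> < d \<longrightarrow> f (h t) = h (f t)"
    using PLO_local_commute[OF inP[OF f] inP[OF h] Fix_inv[OF p f] Fix_inv[OF p h]] by blast
  define q where "q = inv f \<otimes> inv h"
  have q: "q \<in> carrier Kg" using f h unfolding q_def by simp
  have qp: "q p = p" using Fix_inv[OF p q] .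
  obtain e where e: "e > 0" "\<forall>t. \<bar>t - p\<bar> < e \<longrightarrow> \<bar>q t - q p\<bar> < d"
    using PLO_eps[OF inP[OF q] d(1)] by blast
  show "\<exists>d>0. \<forall>t. \<bar>t - p\<bar> < d \<longrightarrow> (f \<otimes> h \<otimes> inv f \<otimes> inv h) t = t"
  proof (rule exI[of _ e], intro conjI allI impI)
    fix t assume "\<bar>t - p\<bar> < e"
    then have "f (h (q t)) = h (f (q t))" using d e qp by auto
    also have "\<dots> = t" unfolding q_def using f h by simp
    finally show "(f \<otimes> h \<otimes> inv f \<otimes> inv h) t = t" unfolding q_def by simp
  qed (rule e(1))
qed

lemma compact_cover: assumes k: "k \<in> carrier Kg" and C: "Cc k"
  shows "\<exists>Xs. finite Xs \<and> spt k \<subseteq> Orb Xs"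
proof -
  have s01: "spt k \<subseteq> {0..1}" using PLO_basic(7)[OF inP[OF k]] unfolding spt_def by blast
  define T where "T = closure (spt k)"
  have cT: "compact T" unfolding T_def using bounded_subset[OF bounded_closed_interval s01]
    by simp
  have nf: "t \<notin> Fix" if t: "t \<in> T" for t
  proof
    assume p: "t \<in> Fix"
    obtain d where d: "d > 0" "\<forall>s. \<bar>s - t\<bar> < d \<longrightarrow> k s = s" using C p unfolding Cc_def by blast
    obtain y where "y \<in> spt k" "dist y t < d" using t d(1) unfolding T_def closure_approachable by blast
    then show False using d unfolding spt_def dist_real_def by auto
  qed
  have cov: "T \<subseteq> (\<Union>t\<in>T. orb t)" using nf orb_self by blast
  obtain C' where C': "C' \<subseteq> T" "finite C'" "T \<subseteq> (\<Union>c\<in>C'. orb c)"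
    using compactE_image[OF cT orb_open cov] by blast
  have "spt k \<subseteq> T" unfolding T_def by (rule closure_subset)
  then show ?thesis using C' unfolding Orb_def by blast
qed

lemma top_end: assumes C: "Cc k" and ne: "orb x \<noteq> {}"
  shows "\<exists>d\<in>orb x. \<forall>t\<in>orb x. d < t \<longrightarrow> k t = t"
proof -
  define Ob where "Ob = orb x"
  have bdd: "bdd_above Ob" unfolding Ob_def using orb_01 by (meson atLeastAtMost_iff bdd_above.I subset_eq)
  have ne': "Ob \<noteq> {}" using ne Ob_def by simp
  define \<beta> where "\<beta> = Sup Ob"
  have up: "t \<le> \<beta>" if "t \<in> Ob" for t using cSup_upper[OF that bdd] \<beta>_def by simp
  have approx: "\<exists>t\<in>Ob. y < t" if "y < \<beta>" for y using less_cSup_iff[OF ne' bdd] that \<beta>_def by simp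
  have nogt: "\<not> g \<beta> > \<beta>" if g: "g \<in> carrier Kg" for g
  proof
    assume gb: "g \<beta> > \<beta>"
    obtain e where e: "e > 0" "\<forall>t. \<bar>t - \<beta>\<bar> < e \<longrightarrow> \<bar>g t - g \<beta>\<bar> < g \<beta> - \<beta>"
      using PLO_eps[OF inP[OF g], of "g \<beta> - \<beta>" \<beta>] gb by auto
    obtain t where t: "t \<in> Ob" "\<beta> - e < t" using approx[of "\<beta> - e"] e(1) by auto
    have "\<bar>t - \<beta>\<bar> < e" using t up by auto
    then have "g t > \<beta>" using e by auto
    moreover have "g t \<in> Ob" using orb_inv[OF g] t Ob_def by simp
    ultimately show False using up by fastforce
  qed
  have bfix: "\<beta> \<in> Fix" unfolding Fix_def
  proof (intro CollectI ballI)
    fix g assume g: "g \<in> carrier Kg"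
    have "\<not> (inv g) \<beta> > \<beta>" using nogt g by simp
    then have "g ((inv g) \<beta>) \<le> g \<beta>" using le_iff[OF g] by simp
    then have "\<beta> \<le> g \<beta>" using g by simp
    then show "g \<beta> = \<beta>" using nogt[OF g] by simp
  qed
  obtain d where d: "d > 0" "\<forall>t. \<bar>t - \<beta>\<bar> < d \<longrightarrow> k t = t" using C bfix unfolding Cc_def by blast
  obtain t0 where t0: "t0 \<in> Ob" "\<beta> - d < t0" using approx[of "\<beta> - d"] d(1) by auto
  show ?thesis
  proof (rule bexI[of _ t0], intro ballI impI)
    fix t assume "t \<in> orb x" "t0 < t"
    then have "\<bar>t - \<beta>\<bar> < d" using up t0 Ob_def by fastforce
    then show "k t = t" using d by auto
  qed (use t0 Ob_def in auto)
qed

lemma bot_end: assumes C: "Cc k" and ne: "orb x \<noteq> {}"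
  shows "\<exists>c\<in>orb x. \<forall>t\<in>orb x. t < c \<longrightarrow> k t = t"
proof -
  define Ob where "Ob = orb x"
  have bdd: "bdd_below Ob" unfolding Ob_def using orb_01 by (meson atLeastAtMost_iff bdd_below.I subset_eq)
  have ne': "Ob \<noteq> {}" using ne Ob_def by simp
  define \<beta> where "\<beta> = Inf Ob"
  have up: "\<beta> \<le> t" if "t \<in> Ob" for t using cInf_lower[OF that bdd] \<beta>_def by simp
  have approx: "\<exists>t\<in>Ob. t < y" if "\<beta> < y" for y using cInf_less_iff[OF ne' bdd] that \<beta>_def by simp
  have nogt: "\<not> g \<beta> < \<beta>" if g: "g \<in> carrier Kg" for g
  proof
    assume gb: "g \<beta> < \<beta>"
    obtain e where e: "e > 0" "\<forall>t. \<bar>t - \<beta>\<bar> < e \<longrightarrow> \<bar>g t - g \<beta>\<bar> < \<beta> - g \<beta>"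
      using PLO_eps[OF inP[OF g], of "\<beta> - g \<beta>" \<beta>] gb by auto
    obtain t where t: "t \<in> Ob" "t < \<beta> + e" using approx[of "\<beta> + e"] e(1) by auto
    have "\<bar>t - \<beta>\<bar> < e" using t up by auto
    then have "g t < \<beta>" using e by auto
    moreover have "g t \<in> Ob" using orb_inv[OF g] t Ob_def by simp
    ultimately show False using up by fastforce
  qed
  have bfix: "\<beta> \<in> Fix" unfolding Fix_def
  proof (intro CollectI ballI)
    fix g assume g: "g \<in> carrier Kg"
    have "\<not> (inv g) \<beta> < \<beta>" using nogt g by simp
    then have "g \<beta> \<le> g ((inv g) \<beta>)" using le_iff[OF g] by simp
    then have "g \<beta> \<le> \<beta>" using g by simp
    then show "g \<beta> = \<beta>" using nogt[OF g] by simp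
  qed
  obtain d where d: "d > 0" "\<forall>t. \<bar>t - \<beta>\<bar> < d \<longrightarrow> k t = t" using C bfix unfolding Cc_def by blast
  obtain t0 where t0: "t0 \<in> Ob" "t0 < \<beta> + d" using approx[of "\<beta> + d"] d(1) by auto
  show ?thesis
  proof (rule bexI[of _ t0], intro ballI impI)
    fix t assume "t \<in> orb x" "t < t0"
    then have "\<bar>t - \<beta>\<bar> < d" using up t0 Ob_def by fastforce
    then show "k t = t" using d by auto
  qed (use t0 Ob_def in auto)
qed


lemma fixU_sub: "subgroup {k\<in>carrier Kg. \<forall>t\<in>U. k t = t} Kg"
proof (rule subgroupI)
  fix a b assume a: "a \<in> {k\<in>carrier Kg. \<forall>t\<in>U. k t = t}" and b: "b \<in> {k\<in>carrier Kg. \<forall>t\<in>U. k t = t}"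
  show "inv a \<in> {k\<in>carrier Kg. \<forall>t\<in>U. k t = t}" using a by (auto, metis inv_app(2))
  show "a \<otimes> b \<in> {k\<in>carrier Kg. \<forall>t\<in>U. k t = t}" using a b by auto
qed auto

lemma gen_fix: assumes "\<Gamma> \<subseteq> carrier Kg" "\<forall>\<gamma>\<in>\<Gamma>. \<forall>t\<in>U. \<gamma> t = t" "a \<in> generate Kg \<Gamma>" "t \<in> U"
  shows "a t = t"
proof -
  have "generate Kg \<Gamma> \<subseteq> {k\<in>carrier Kg. \<forall>t\<in>U. k t = t}"
    by (rule generate_subgroup_incl[OF _ fixU_sub]) (use assms in auto)
  then show ?thesis using assms by auto
qed

lemma core_push:
  assumes Ga: "finite Ga" "Ga \<subseteq> LX Xs" and Gb: "finite Gb" "Gb \<subseteq> LX Xs"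
  shows "\<exists>g\<in>carrier Kg. \<forall>a\<in>generate Kg Ga. \<forall>b\<in>generate Kg Gb. \<forall>t\<in>orb x0.
           (g \<otimes> a \<otimes> inv g) (b t) = b ((g \<otimes> a \<otimes> inv g) t)"
proof (cases "orb x0 = {}")
  case True
  then show ?thesis by auto
next
  case ne: False
  define Ob where "Ob = orb x0"
  obtain o0 where o0: "o0 \<in> Ob" using ne Ob_def by auto
  have GaK: "Ga \<subseteq> carrier Kg" and GbK: "Gb \<subseteq> carrier Kg" using Ga Gb unfolding LX_def by auto
  have "\<forall>\<gamma>\<in>Ga. \<exists>d\<in>Ob. \<forall>t\<in>Ob. d < t \<longrightarrow> \<gamma> t = t"
    using top_end ne Ga(2) unfolding LX_def Ob_def by blast
  then obtain D where D: "\<And>\<gamma>. \<gamma> \<in> Ga \<Longrightarrow> D \<gamma> \<in> Ob \<and> (\<forall>t\<in>Ob. D \<gamma> < t \<longrightarrow> \<gamma> t = t)" by metis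
  have "\<forall>\<gamma>\<in>Gb. \<exists>c\<in>Ob. \<forall>t\<in>Ob. t < c \<longrightarrow> \<gamma> t = t"
    using bot_end ne Gb(2) unfolding LX_def Ob_def by blast
  then obtain Cf where Cf: "\<And>\<gamma>. \<gamma> \<in> Gb \<Longrightarrow> Cf \<gamma> \<in> Ob \<and> (\<forall>t\<in>Ob. t < Cf \<gamma> \<longrightarrow> \<gamma> t = t)" by metis
  define d where "d = Max (insert o0 (D ` Ga))"
  define c where "c = Min (insert o0 (Cf ` Gb))"
  have dO: "d \<in> Ob" unfolding d_def using Max_in[of "insert o0 (D ` Ga)"] Ga(1) o0 D by auto
  have cO: "c \<in> Ob" unfolding c_def using Min_in[of "insert o0 (Cf ` Gb)"] Gb(1) o0 Cf by auto
  have aU: "a t = t" if "a \<in> generate Kg Ga" "t \<in> Ob \<inter> {d<..}" for a t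
  proof (rule gen_fix[OF GaK _ that])
    show "\<forall>\<gamma>\<in>Ga. \<forall>t\<in>Ob \<inter> {d<..}. \<gamma> t = t"
    proof (intro ballI)
      fix \<gamma> t assume "\<gamma> \<in> Ga" "t \<in> Ob \<inter> {d<..}"
      moreover have "D \<gamma> \<le> d" unfolding d_def using Ga(1) \<open>\<gamma> \<in> Ga\<close> by (intro Max_ge) auto
      ultimately show "\<gamma> t = t" using D by fastforce
    qed
  qed
  have bU: "b t = t" if "b \<in> generate Kg Gb" "t \<in> Ob \<inter> {..<c}" for b t
  proof (rule gen_fix[OF GbK _ that])
    show "\<forall>\<gamma>\<in>Gb. \<forall>t\<in>Ob \<inter> {..<c}. \<gamma> t = t"
    proof (intro ballI)
      fix \<gamma> t assume "\<gamma> \<in> Gb" "t \<in> Ob \<inter> {..<c}"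
      moreover have "c \<le> Cf \<gamma>" unfolding c_def using Gb(1) \<open>\<gamma> \<in> Gb\<close> by (intro Min_le) auto
      ultimately show "\<gamma> t = t" using Cf by fastforce
    qed
  qed
  have "c \<in> orb d" using orb_eq[of d x0] dO cO Ob_def by simp
  then obtain g where g: "g \<in> carrier Kg" "g d < c" unfolding orb_def by blast
  show ?thesis
  proof (intro bexI[OF _ g(1)] ballI)
    fix a b t assume a: "a \<in> generate Kg Ga" and b: "b \<in> generate Kg Gb" and t: "t \<in> orb x0"
    have aK: "a \<in> carrier Kg" using a generate_in_carrier[OF GaK] by blast
    have bK: "b \<in> carrier Kg" using b generate_in_carrier[OF GbK] by blast
    define a' where "a' = g \<otimes> a \<otimes> inv g"
    have a'K: "a' \<in> carrier Kg" unfolding a'_def using g aK by simp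
    have a'U: "a' s = s" if s: "s \<in> Ob" "g d < s" for s
    proof -
      have "(inv g) s \<in> Ob" using orb_inv[of "inv g" s x0] g s Ob_def by simp
      moreover have "d < (inv g) s" using less_iff[OF g(1), of d "(inv g) s"] g s by simp
      ultimately have "a ((inv g) s) = (inv g) s" using aU[OF a] by simp
      then show ?thesis unfolding a'_def using g by simp
    qed
    have tO: "t \<in> Ob" using t Ob_def by simp
    have a't: "a' t \<in> Ob" using orb_inv[OF a'K] tO Ob_def by simp
    have bt: "b t \<in> Ob" using orb_inv[OF bK] tO Ob_def by simp
    have "a' (b t) = b (a' t)"
    proof (cases "t < c")
      case True
      then have btt: "b t = t" using bU[OF b] tO by simp
      show ?thesis
      proof (cases "a' t < c")
        case True
        then show ?thesis using bU[OF b] a't btt by simp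
      next
        case False
        then have "a' (a' t) = a' t" using a'U a't g(2) by simp
        then have "a' t = t" using eq_iff[OF a'K] by simp
        then show ?thesis using False \<open>t < c\<close> by simp
      qed
    next
      case False
      then have a'tt: "a' t = t" using a'U tO g(2) by simp
      show ?thesis
      proof (cases "b t < c")
        case False
        then show ?thesis using a'U bt g(2) a'tt by simp
      next
        case True
        then have "b (b t) = b t" using bU[OF b] bt by simp
        then have "b t = t" using eq_iff[OF bK] by simp
        then show ?thesis using True \<open>\<not> t < c\<close> by simp
      qed
    qed
    then show "(g \<otimes> a \<otimes> inv g) (b t) = b ((g \<otimes> a \<otimes> inv g) t)" unfolding a'_def .
  qed
qed

lemma push:
  assumes x0: "x0 \<in> Xs" and Ga: "finite Ga" "Ga \<subseteq> LX Xs" and Gb: "finite Gb" "Gb \<subseteq> LX Xs"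
  shows "\<exists>g\<in>carrier Kg. \<forall>a\<in>generate Kg Ga. \<forall>b\<in>generate Kg Gb.
           (g \<otimes> a \<otimes> inv g) \<otimes> b \<otimes> inv (b \<otimes> (g \<otimes> a \<otimes> inv g)) \<in> LX (Xs - {x0})"
proof -
  obtain g where g: "g \<in> carrier Kg" and gp: "\<forall>a\<in>generate Kg Ga. \<forall>b\<in>generate Kg Gb. \<forall>t\<in>orb x0.
           (g \<otimes> a \<otimes> inv g) (b t) = b ((g \<otimes> a \<otimes> inv g) t)"
    using core_push[OF Ga Gb] by blast
  have LXs: "subgroup (LX Xs) Kg" using LX_normal normal_imp_subgroup by blast
  show ?thesis
  proof (intro bexI[OF _ g] ballI)
    fix a b assume a: "a \<in> generate Kg Ga" and b: "b \<in> generate Kg Gb"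
    have aL: "a \<in> LX Xs" using generate_subgroup_incl[OF Ga(2) LXs] a by blast
    have bL: "b \<in> LX Xs" using generate_subgroup_incl[OF Gb(2) LXs] b by blast
    define a' where "a' = g \<otimes> a \<otimes> inv g"
    have a'L: "a' \<in> LX Xs" unfolding a'_def using normal_invE(2)[OF LX_normal g aL] .
    define k where "k = a' \<otimes> b \<otimes> inv (b \<otimes> a')"
    have kL: "k \<in> LX Xs" unfolding k_def using a'L bL LXs
      by (simp add: subgroup.m_closed subgroup.m_inv_closed)
    have bK: "b \<in> carrier Kg" and a'K: "a' \<in> carrier Kg" using bL a'L unfolding LX_def by auto
    have ba: "b \<otimes> a' \<in> carrier Kg" using bK a'K by simp
    have kO: "k t = t" if t: "t \<in> orb x0" for t
    proof -
      define s where "s = (inv (b \<otimes> a')) t"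
      have s: "s \<in> orb x0" unfolding s_def using orb_inv[of "inv (b \<otimes> a')"] ba t by simp
      have "k t = a' (b s)" unfolding k_def s_def by simp
      also have "\<dots> = b (a' s)" using gp a b s unfolding a'_def by blast
      also have "\<dots> = (b \<otimes> a') s" by simp
      also have "\<dots> = t" unfolding s_def using inv_app(1)[OF ba] by simp
      finally show ?thesis .
    qed
    have "spt k \<subseteq> Orb (Xs - {x0})"
    proof
      fix t assume t: "t \<in> spt k"
      then have "t \<in> Orb Xs" using kL unfolding LX_def by auto
      then obtain x where x: "x \<in> Xs" "t \<in> orb x" unfolding Orb_def by blast
      have "x \<noteq> x0" using kO t x unfolding spt_def by auto
      then show "t \<in> Orb (Xs - {x0})" using x unfolding Orb_def by blast
    qed
    then show "(g \<otimes> a \<otimes> inv g) \<otimes> b \<otimes> inv (b \<otimes> (g \<otimes> a \<otimes> inv g)) \<in> LX (Xs - {x0})"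
      using kL unfolding LX_def k_def a'_def by auto
  qed
qed

end




context plk begin

lemma find_L:
  assumes N: "subgroup N Kg" and notall: "\<not> carrier Kg \<subseteq> N"
  shows "\<exists>L. L \<lhd> Kg \<and> \<not> L \<subseteq> N \<and> (\<forall>Ga Gb. finite Ga \<longrightarrow> Ga \<subseteq> L \<longrightarrow> finite Gb \<longrightarrow> Gb \<subseteq> L \<longrightarrow>
     (\<exists>g\<in>carrier Kg. \<forall>a\<in>generate Kg Ga. \<forall>b\<in>generate Kg Gb.
        (g \<otimes> a \<otimes> inv g) \<otimes> b \<otimes> inv (b \<otimes> (g \<otimes> a \<otimes> inv g)) \<in> N))"
proof (cases "\<forall>f\<in>carrier Kg. \<forall>h\<in>carrier Kg. f \<otimes> h \<otimes> inv f \<otimes> inv h \<in> N")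
  case True
  show ?thesis
  proof (intro exI[of _ "carrier Kg"] conjI allI impI)
    show "carrier Kg \<lhd> Kg" by (rule normal_self)
    show "\<not> carrier Kg \<subseteq> N" by (rule notall)
    fix Ga Gb assume "finite Ga" "Ga \<subseteq> carrier Kg" "finite Gb" "Gb \<subseteq> carrier Kg"
    show "\<exists>g\<in>carrier Kg. \<forall>a\<in>generate Kg Ga. \<forall>b\<in>generate Kg Gb.
        (g \<otimes> a \<otimes> inv g) \<otimes> b \<otimes> inv (b \<otimes> (g \<otimes> a \<otimes> inv g)) \<in> N"
    proof (intro bexI[of _ \<one>] ballI)
      fix a b assume a: "a \<in> generate Kg Ga" and b: "b \<in> generate Kg Gb"
      have aK: "a \<in> carrier Kg" using a generate_in_carrier \<open>Ga \<subseteq> carrier Kg\<close> by blast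
      have bK: "b \<in> carrier Kg" using b generate_in_carrier \<open>Gb \<subseteq> carrier Kg\<close> by blast
      have "(\<one> \<otimes> a \<otimes> inv \<one>) \<otimes> b \<otimes> inv (b \<otimes> (\<one> \<otimes> a \<otimes> inv \<one>)) = a \<otimes> b \<otimes> inv a \<otimes> inv b"
        using aK bK by (simp add: inv_mult_group m_assoc)
      then show "(\<one> \<otimes> a \<otimes> inv \<one>) \<otimes> b \<otimes> inv (b \<otimes> (\<one> \<otimes> a \<otimes> inv \<one>)) \<in> N"
        using True aK bK by simp
    qed simp
  qed
next
  case False
  then obtain f h where fh: "f \<in> carrier Kg" "h \<in> carrier Kg" "f \<otimes> h \<otimes> inv f \<otimes> inv h \<notin> N" by blast
  define k0 where "k0 = f \<otimes> h \<otimes> inv f \<otimes> inv h"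
  have k0K: "k0 \<in> carrier Kg" unfolding k0_def using fh by simp
  have Ck0: "Cc k0" unfolding k0_def using comm_Cc fh by simp
  obtain X0 where X0: "finite X0" "spt k0 \<subseteq> Orb X0" using compact_cover[OF k0K Ck0] by blast
  define P where "P = (\<lambda>Xs. finite Xs \<and> \<not> LX Xs \<subseteq> N)"
  have "P X0" unfolding P_def LX_def using X0 k0K Ck0 fh(3) k0_def by blast
  then obtain Xs where PX: "P Xs" and minX: "\<And>Y. P Y \<Longrightarrow> card Xs \<le> card Y"
    using ex_has_least_nat[of P X0 card] by blast
  have "LX {} \<subseteq> N"
  proof
    fix k assume "k \<in> LX {}"
    then have "k \<in> carrier Kg" "spt k = {}" unfolding LX_def Orb_def by auto
    then have "k = \<one>" unfolding spt_def oneK by auto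
    then show "k \<in> N" using subgroup.one_closed[OF N] by simp
  qed
  then have "Xs \<noteq> {}" using PX unfolding P_def by auto
  then obtain x0 where x0: "x0 \<in> Xs" by blast
  have fX: "finite Xs" using PX unfolding P_def by simp
  have "card (Xs - {x0}) < card Xs" using card_Diff1_less[OF fX x0] .
  then have "\<not> P (Xs - {x0})" using minX by fastforce
  then have sub: "LX (Xs - {x0}) \<subseteq> N" using fX unfolding P_def by simp
  show ?thesis
  proof (intro exI[of _ "LX Xs"] conjI allI impI)
    show "LX Xs \<lhd> Kg" by (rule LX_normal)
    show "\<not> LX Xs \<subseteq> N" using PX unfolding P_def by simp
    fix Ga Gb assume fa: "finite Ga" and ga: "Ga \<subseteq> LX Xs" and fb: "finite Gb" and gb: "Gb \<subseteq> LX Xs"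
    obtain g where g: "g \<in> carrier Kg" and gp: "\<forall>a\<in>generate Kg Ga. \<forall>b\<in>generate Kg Gb.
        (g \<otimes> a \<otimes> inv g) \<otimes> b \<otimes> inv (b \<otimes> (g \<otimes> a \<otimes> inv g)) \<in> LX (Xs - {x0})"
      using push[OF x0 fa ga fb gb] by blast
    show "\<exists>g\<in>carrier Kg. \<forall>a\<in>generate Kg Ga. \<forall>b\<in>generate Kg Gb.
        (g \<otimes> a \<otimes> inv g) \<otimes> b \<otimes> inv (b \<otimes> (g \<otimes> a \<otimes> inv g)) \<in> N"
    proof (rule bexI[OF _ g], intro ballI)
      fix a b assume a: "a \<in> generate Kg Ga" and b: "b \<in> generate Kg Gb"
      show "(g \<otimes> a \<otimes> inv g) \<otimes> b \<otimes> inv (b \<otimes> (g \<otimes> a \<otimes> inv g)) \<in> N"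
        by (rule subsetD[OF sub]) (use gp a b in blast)
    qed
  qed
qed

end

lemma theta_eq:
  assumes G: "group G" and K: "group Kg" and th: "\<theta> \<in> hom Kg G"
    and ker: "\<And>k. k \<in> carrier Kg \<Longrightarrow> \<theta> k = \<one>\<^bsub>G\<^esub> \<longleftrightarrow> k \<in> N"
    and u: "u \<in> carrier Kg" and v: "v \<in> carrier Kg" and uv: "u \<otimes>\<^bsub>Kg\<^esub> inv\<^bsub>Kg\<^esub> v \<in> N"
  shows "\<theta> u = \<theta> v"
proof -
  have gh: "group_hom Kg G \<theta>" using G K th by (simp add: group_hom_def group_hom_axioms_def)
  have c: "u \<otimes>\<^bsub>Kg\<^esub> inv\<^bsub>Kg\<^esub> v \<in> carrier Kg" using u v K by (simp add: group.inv_closed monoid.m_closed group.is_monoid)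
  have "\<theta> (u \<otimes>\<^bsub>Kg\<^esub> inv\<^bsub>Kg\<^esub> v) = \<one>\<^bsub>G\<^esub>" using ker[OF c] uv by simp
  then have "\<theta> u \<otimes>\<^bsub>G\<^esub> inv\<^bsub>G\<^esub> \<theta> v = \<one>\<^bsub>G\<^esub>"
    using u v group_hom.hom_mult[OF gh] group_hom.hom_inv[OF gh] K by (simp add: group.inv_closed)
  then show ?thesis using u v gh G
    by (metis group.inv_equality group.inv_inv group_hom.hom_closed group.inv_closed group.r_inv)
qed

theorem lemma4p7:
  fixes G (structure)
  assumes "group G" and "in_QPLO G" and "fin_gen G (carrier G)"
    and "carrier G \<noteq> {\<one>}"
  shows "\<exists>H. H \<lhd> G \<and> H \<noteq> {\<one>} \<and>
           (\<forall>A B. A \<subseteq> H \<and> B \<subseteq> H \<and> subgroup A G \<and> subgroup B G \<and>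
                  fin_gen G A \<and> fin_gen G B \<longrightarrow>
              (\<exists>g\<in>carrier G. \<forall>a\<in>A. \<forall>b\<in>B.
                 (g \<otimes> a \<otimes> inv g) \<otimes> b = b \<otimes> (g \<otimes> a \<otimes> inv g)))"
proof -
  obtain K N where KP: "subgroup K PLgroup" and N: "N \<lhd> (PLgroup\<lparr>carrier := K\<rparr>)"
    and iso: "G \<cong> ((PLgroup\<lparr>carrier := K\<rparr>) Mod N)"
    using assms(2) unfolding in_QPLO_def by blast
  define Kg where "Kg = PLgroup\<lparr>carrier := K\<rparr>"
  have Kgrp: "group Kg" using N unfolding Kg_def by (simp add: normal_def)
  have Nn: "N \<lhd> Kg" using N unfolding Kg_def .
  have Nsub: "subgroup N Kg" using Nn by (rule normal_imp_subgroup)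
  have pl: "plk Kg"
    apply (rule plk.intro)
    using Kgrp subgroup.subset[OF KP] unfolding Kg_def PLgroup_def by auto
  obtain \<phi> where phi: "\<phi> \<in> iso G (Kg Mod N)" using iso unfolding is_iso_def Kg_def by blast
  obtain \<theta> where th: "\<theta> \<in> hom Kg G" and surj: "\<theta> ` carrier Kg = carrier G"
    and ker: "\<And>k. k \<in> carrier Kg \<Longrightarrow> \<theta> k = \<one> \<longleftrightarrow> k \<in> N"
    using theta_exists[OF assms(1) Nn phi] by blast
  have notall: "\<not> carrier Kg \<subseteq> N"
  proof
    assume "carrier Kg \<subseteq> N"
    then have "\<theta> ` carrier Kg \<subseteq> {\<one>}" using ker by auto
    then have "carrier G \<subseteq> {\<one>}" using surj by simp
    moreover have "\<one> \<in> carrier G" using monoid.one_closed[OF group.is_monoid[OF assms(1)]] .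
    ultimately have "carrier G = {\<one>}" by auto
    then show False using assms(4) by simp
  qed
  obtain L where L: "L \<lhd> Kg" "\<not> L \<subseteq> N" and push0: "\<forall>Ga Gb. finite Ga \<longrightarrow> Ga \<subseteq> L \<longrightarrow> finite Gb \<longrightarrow> Gb \<subseteq> L \<longrightarrow>
     (\<exists>g\<in>carrier Kg. \<forall>a\<in>generate Kg Ga. \<forall>b\<in>generate Kg Gb.
        (g \<otimes>\<^bsub>Kg\<^esub> a \<otimes>\<^bsub>Kg\<^esub> inv\<^bsub>Kg\<^esub> g) \<otimes>\<^bsub>Kg\<^esub> b \<otimes>\<^bsub>Kg\<^esub> inv\<^bsub>Kg\<^esub> (b \<otimes>\<^bsub>Kg\<^esub> (g \<otimes>\<^bsub>Kg\<^esub> a \<otimes>\<^bsub>Kg\<^esub> inv\<^bsub>Kg\<^esub> g)) \<in> N)"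
    using plk.find_L[OF pl Nsub notall] by (elim exE conjE) (rule that)
  note push = push0[rule_format]
  have push2: "\<exists>g\<in>carrier Kg. \<forall>a\<in>generate Kg Ga. \<forall>b\<in>generate Kg Gb.
         \<theta> ((g \<otimes>\<^bsub>Kg\<^esub> a \<otimes>\<^bsub>Kg\<^esub> inv\<^bsub>Kg\<^esub> g) \<otimes>\<^bsub>Kg\<^esub> b) = \<theta> (b \<otimes>\<^bsub>Kg\<^esub> (g \<otimes>\<^bsub>Kg\<^esub> a \<otimes>\<^bsub>Kg\<^esub> inv\<^bsub>Kg\<^esub> g))"
    if H1: "finite Ga" and H2: "Ga \<subseteq> L" and H3: "finite Gb" and H4: "Gb \<subseteq> L" for Ga Gb
  proof -
    have LK: "L \<subseteq> carrier Kg" using subgroup.subset[OF normal_imp_subgroup[OF L(1)]] .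
    obtain g where g: "g \<in> carrier Kg" and gp: "\<forall>a\<in>generate Kg Ga. \<forall>b\<in>generate Kg Gb.
        (g \<otimes>\<^bsub>Kg\<^esub> a \<otimes>\<^bsub>Kg\<^esub> inv\<^bsub>Kg\<^esub> g) \<otimes>\<^bsub>Kg\<^esub> b \<otimes>\<^bsub>Kg\<^esub> inv\<^bsub>Kg\<^esub> (b \<otimes>\<^bsub>Kg\<^esub> (g \<otimes>\<^bsub>Kg\<^esub> a \<otimes>\<^bsub>Kg\<^esub> inv\<^bsub>Kg\<^esub> g)) \<in> N"
      using push[OF H1 H2 H3 H4] by (elim bexE) (rule that)
    show ?thesis
    proof (intro bexI[OF _ g] ballI)
      fix a b assume a: "a \<in> generate Kg Ga" and b: "b \<in> generate Kg Gb"
      have aK: "a \<in> carrier Kg" using a group.generate_in_carrier[OF Kgrp] H2 LK by blast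
      have bK: "b \<in> carrier Kg" using b group.generate_in_carrier[OF Kgrp] H4 LK by blast
      have xK: "g \<otimes>\<^bsub>Kg\<^esub> a \<otimes>\<^bsub>Kg\<^esub> inv\<^bsub>Kg\<^esub> g \<in> carrier Kg" using aK g Kgrp
        by (simp add: group.inv_closed monoid.m_closed group.is_monoid)
      show "\<theta> ((g \<otimes>\<^bsub>Kg\<^esub> a \<otimes>\<^bsub>Kg\<^esub> inv\<^bsub>Kg\<^esub> g) \<otimes>\<^bsub>Kg\<^esub> b) = \<theta> (b \<otimes>\<^bsub>Kg\<^esub> (g \<otimes>\<^bsub>Kg\<^esub> a \<otimes>\<^bsub>Kg\<^esub> inv\<^bsub>Kg\<^esub> g))"
        by (rule theta_eq[OF assms(1) Kgrp th ker]) 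
           (use xK bK gp a b Kgrp in \<open>auto simp: monoid.m_closed group.is_monoid\<close>)
    qed
  qed
  show ?thesis
    by (rule main_transfer[OF assms(1) Kgrp th surj ker L push2])
qed


end
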